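(* Let $E$ be a countable set, $V$ a topological vector space over a field $k$, $f:E\to V$ a function, and $M_f=(E,\mathcal{L}(f))$ the associated topological independence system. An independent set $S\in\mathcal{L}(f)$ is maximal in $\mathcal{L}(f)$ if and only if $f(e)\in\hat f(C_S(f))$ for every $e\in E$.
   Context: Let $C(f)$ be the set of $c\in k^E$ such that the sum $\sum_{e\in E}c(e)f(e)$ converges in the topology of $V$ (meaning that one of its sequences of partial sums converges absolutely), and define $\hat f:C(f)\to V$ by $\hat f(c)=\sum_{e\in E}c(e)f(e)$. For $S\subseteq E$ let $C_S(f)=\{c\in C(f): c(e)=0 \text{ for all } e\in E\setminus S\}$ and let $\hat f|_S$ be the restriction of $\hat f$ to $C_S(f)$. Then $\mathcal{L}(f)=\{S\subseteq E: \ker(\hat f|_S)=\{0\}\}$, and $M_f=(E,\mathcal{L}(f))$ is called a topological independence system. Maximality is with respect to inclusion. *)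

theory Defs
  imports "HOL-Analysis.Analysis"
begin

definition topological_field_on :: "('k::{field,topological_space}) itself \<Rightarrow> bool" where
  "topological_field_on _ \<longleftrightarrow>
     continuous_on UNIV (\<lambda>(a::'k, b). a + b) \<and>
     continuous_on UNIV (\<lambda>(a::'k, b). a * b) \<and>
     continuous_on UNIV (\<lambda>a::'k. - a) \<and>
     continuous_on (UNIV - {0}) (\<lambda>a::'k. inverse a)"

definition tvs :: "('k::{field,topological_space} \<Rightarrow> 'v::{ab_group_add,t2_space} \<Rightarrow> 'v) \<Rightarrow> bool" where
  "tvs smul \<longleftrightarrow>
     topological_field_on TYPE('k) \<and>
     (\<forall>a x y. smul a (x + y) = smul a x + smul a y) \<and>
     (\<forall>a b x. smul (a + b) x = smul a x + smul b x) \<and>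
     (\<forall>a b x. smul (a * b) x = smul a (smul b x)) \<and>
     (\<forall>x. smul 1 x = x) \<and>
     continuous_on UNIV (\<lambda>(x::'v, y). x + y) \<and>
     continuous_on UNIV (\<lambda>x::'v. - x) \<and>
     continuous_on UNIV (\<lambda>(a, x). smul a x)"

definition convC :: "('k::field \<Rightarrow> 'v::{ab_group_add,t2_space} \<Rightarrow> 'v) \<Rightarrow> 'e set \<Rightarrow> ('e \<Rightarrow> 'v) \<Rightarrow> ('e \<Rightarrow> 'k) set" where
  "convC smul E f = {c. (\<forall>e. e \<notin> E \<longrightarrow> c e = 0) \<and> (\<lambda>e. smul (c e) (f e)) summable_on E}"

definition fhat :: "('k::field \<Rightarrow> 'v::{ab_group_add,t2_space} \<Rightarrow> 'v) \<Rightarrow> 'e set \<Rightarrow> ('e \<Rightarrow> 'v) \<Rightarrow> ('e \<Rightarrow> 'k) \<Rightarrow> 'v" where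
  "fhat smul E f c = (\<Sum>\<^sub>\<infinity>e\<in>E. smul (c e) (f e))"

definition convC_S :: "('k::field \<Rightarrow> 'v::{ab_group_add,t2_space} \<Rightarrow> 'v) \<Rightarrow> 'e set \<Rightarrow> ('e \<Rightarrow> 'v) \<Rightarrow> 'e set \<Rightarrow> ('e \<Rightarrow> 'k) set" where
  "convC_S smul E f S = {c \<in> convC smul E f. \<forall>e \<in> E - S. c e = 0}"

definition indepL :: "('k::field \<Rightarrow> 'v::{ab_group_add,t2_space} \<Rightarrow> 'v) \<Rightarrow> 'e set \<Rightarrow> ('e \<Rightarrow> 'v) \<Rightarrow> 'e set set" where
  "indepL smul E f = {S. S \<subseteq> E \<and>
     {c \<in> convC_S smul E f S. fhat smul E f c = 0} = {(\<lambda>_. 0)}}"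

end

theory Submission
  imports Defs
begin


lemma has_sum_add_tvs:
  fixes g h :: "'e \<Rightarrow> 'v::{ab_group_add,t2_space}"
  assumes c: "continuous_on UNIV (\<lambda>(x::'v, y). x + y)"
    and g: "(g has_sum a) A" and h: "(h has_sum b) A"
  shows "((\<lambda>x. g x + h x) has_sum (a + b)) A"
proof -
  have t: "((\<lambda>F. (sum g F, sum h F)) \<longlongrightarrow> (a, b)) (finite_subsets_at_top A)"
    using g h unfolding has_sum_def by (rule tendsto_Pair)
  have e: "(\<lambda>F. sum (\<lambda>x. g x + h x) F) = (\<lambda>F. sum g F + sum h F)" by (simp add: sum.distrib)
  have "((\<lambda>F. (\<lambda>(x,y). x+y) (sum g F, sum h F)) \<longlongrightarrow> (\<lambda>(x,y). x+y) (a,b)) (finite_subsets_at_top A)"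
    by (rule continuous_on_tendsto_compose[OF c t]) auto
  then show ?thesis unfolding has_sum_def e by simp
qed

lemma smul_zero_tvs:
  assumes "tvs smul" shows "smul a 0 = 0" "smul 0 x = 0" "smul (-1) x = - x"
proof -
  have "smul a (0+0) = smul a 0 + smul a 0" using assms unfolding tvs_def by blast
  then show "smul a 0 = 0" by simp
  have "smul (0+0) x = smul 0 x + smul 0 x" using assms unfolding tvs_def by blast
  then show z: "smul 0 x = 0" by simp
  have "smul (1 + -1) x = smul 1 x + smul (-1) x" using assms unfolding tvs_def by blast
  moreover have "smul 1 x = x" using assms unfolding tvs_def by blast
  ultimately show "smul (-1) x = - x" using z by (simp add: eq_neg_iff_add_eq_0 add.commute)
qed

lemma smul_sum_tvs:
  assumes "tvs smul" shows "smul a (sum g F) = sum (\<lambda>x. smul a (g x)) F"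
proof (cases "finite F")
  case True then show ?thesis
  proof (induction F rule: finite_induct)
    case empty then show ?case using smul_zero_tvs[OF assms] by simp
  next
    case (insert x F) then show ?case using assms unfolding tvs_def by simp
  qed
next
  case False then show ?thesis using smul_zero_tvs[OF assms] by simp
qed

lemma has_sum_smul_tvs:
  assumes tv: "tvs smul" and g: "(g has_sum s) A"
  shows "((\<lambda>x. smul a (g x)) has_sum smul a s) A"
proof -
  have t: "((\<lambda>F. (a, sum g F)) \<longlongrightarrow> (a, s)) (finite_subsets_at_top A)"
    using g unfolding has_sum_def by (intro tendsto_Pair tendsto_const)
  have c: "continuous_on UNIV (\<lambda>(a, x). smul a x)"
    using tv unfolding tvs_def by blast
  have "((\<lambda>F. (\<lambda>(a, x). smul a x) (a, sum g F)) \<longlongrightarrow> (\<lambda>(a, x). smul a x) (a,s)) (finite_subsets_at_top A)"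
    by (rule continuous_on_tendsto_compose[OF c t]) auto
  then show ?thesis unfolding has_sum_def by (simp add: smul_sum_tvs[OF tv])
qed

lemma has_sum_single:
  fixes v :: "'v::{ab_group_add,t2_space}"
  assumes "e \<in> E" shows "((\<lambda>x. if x = e then v else 0) has_sum v) E"
proof -
  have "((\<lambda>x. if x = e then v else 0) has_sum (\<Sum>x\<in>{e}. if x = e then v else 0)) {e}"
    by (rule has_sum_finite) simp
  then have "((\<lambda>x. if x = e then v else 0) has_sum v) {e}" by simp
  then show ?thesis
    by (rule has_sum_cong_neutral[THEN iffD1, rotated -1]) (use assms in auto)
qed

theorem theorem6p2p1:
  fixes smul :: "'k::{field,topological_space} \<Rightarrow> 'v::{ab_group_add,t2_space} \<Rightarrow> 'v"
    and E :: "'e set" and f :: "'e \<Rightarrow> 'v" and S :: "'e set"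
  assumes "countable E"
    and "tvs smul"
    and "S \<in> indepL smul E f"
  shows "(\<not> (\<exists>T \<in> indepL smul E f. S \<subset> T)) \<longleftrightarrow>
         (\<forall>e \<in> E. f e \<in> fhat smul E f ` convC_S smul E f S)"
proof -
  note tv = assms(2)
  note z = smul_zero_tvs[OF tv]
  have cadd: "continuous_on UNIV (\<lambda>(x::'v, y). x + y)" using tv unfolding tvs_def by blast
  have SE: "S \<subseteq> E" and Sind: "{c \<in> convC_S smul E f S. fhat smul E f c = 0} = {(\<lambda>_. 0)}"
    using assms(3) unfolding indepL_def by auto
  show ?thesis
  proof
    assume max: "\<not> (\<exists>T \<in> indepL smul E f. S \<subset> T)"
    show "\<forall>e \<in> E. f e \<in> fhat smul E f ` convC_S smul E f S"
    proof
      fix e assume eE: "e \<in> E"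
      show "f e \<in> fhat smul E f ` convC_S smul E f S"
      proof (cases "e \<in> S")
        case True
        define c where "c = (\<lambda>x. if x = e then (1::'k) else 0)"
        have eq: "(\<lambda>x. smul (c x) (f x)) = (\<lambda>x. if x = e then f e else 0)"
          using tv z unfolding c_def tvs_def by auto
        have hs: "((\<lambda>x. smul (c x) (f x)) has_sum f e) E"
          unfolding eq by (rule has_sum_single[OF eE])
        have "c \<in> convC_S smul E f S"
          unfolding convC_S_def convC_def using hs True eE
          by (auto simp: c_def summable_on_def)
        moreover have "fhat smul E f c = f e"
          unfolding fhat_def using hs by (rule infsumI)
        ultimately show ?thesis by force
      next
        case False
        define T where "T = insert e S"
        have "S \<subset> T" using False unfolding T_def by auto
        moreover have TE: "T \<subseteq> E" using SE eE unfolding T_def by auto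
        ultimately have "T \<notin> indepL smul E f" using max by blast
        then have ne: "{c \<in> convC_S smul E f T. fhat smul E f c = 0} \<noteq> {(\<lambda>_. 0)}"
          using TE unfolding indepL_def by auto
        have zin: "(\<lambda>_. 0) \<in> {c \<in> convC_S smul E f T. fhat smul E f c = 0}"
          by (simp add: convC_S_def convC_def fhat_def z)
        obtain c where cT: "c \<in> convC_S smul E f T" and c0: "fhat smul E f c = 0"
          and cne: "c \<noteq> (\<lambda>_. 0)"
          using ne zin by blast
        have cout: "\<And>x. x \<notin> T \<Longrightarrow> c x = 0"
          using cT unfolding convC_S_def convC_def by auto
        have csum: "((\<lambda>x. smul (c x) (f x)) has_sum 0) E"
          using cT c0 unfolding convC_S_def convC_def fhat_def
          by (metis (no_types, lifting) mem_Collect_eq has_sum_infsum)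
        have ce: "c e \<noteq> 0"
        proof
          assume ce: "c e = 0"
          have "c \<in> convC_S smul E f S"
            using cT ce unfolding convC_S_def convC_def T_def by auto
          then have "c \<in> {c \<in> convC_S smul E f S. fhat smul E f c = 0}" using c0 by simp
          then show False using Sind cne by blast
        qed
        define a where "a = - inverse (c e)"
        define d where "d = (\<lambda>x. if x = e then 0 else a * c x)"
        have h1: "((\<lambda>x. smul a (smul (c x) (f x))) has_sum smul a 0) E"
          by (rule has_sum_smul_tvs[OF tv csum])
        have h2: "((\<lambda>x. smul a (smul (c x) (f x)) + (if x = e then f e else 0)) has_sum (smul a 0 + f e)) E"
          by (rule has_sum_add_tvs[OF cadd h1 has_sum_single[OF eE]])
        have eq: "smul a (smul (c x) (f x)) + (if x = e then f e else 0) = smul (d x) (f x)" for x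
        proof (cases "x = e")
          case True
          have "smul a (smul (c x) (f x)) = smul (a * c e) (f e)" using True tv unfolding tvs_def by simp
          also have "a * c e = -1" using ce unfolding a_def by simp
          finally show ?thesis using True z by (simp add: d_def)
        next
          case False
          then show ?thesis using tv unfolding tvs_def d_def by simp
        qed
        have hs: "((\<lambda>x. smul (d x) (f x)) has_sum f e) E"
          using h2 unfolding eq z by simp
        have "d \<in> convC_S smul E f S"
          unfolding convC_S_def convC_def using hs cout SE
          by (auto simp: d_def summable_on_def T_def)
        moreover have "fhat smul E f d = f e"
          unfolding fhat_def using hs by (rule infsumI)
        ultimately show ?thesis by force
      qed
    qed
  next
    assume all: "\<forall>e \<in> E. f e \<in> fhat smul E f ` convC_S smul E f S"
    show "\<not> (\<exists>T \<in> indepL smul E f. S \<subset> T)"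
    proof
      assume "\<exists>T \<in> indepL smul E f. S \<subset> T"
      then obtain T where Ti: "T \<in> indepL smul E f" and ST: "S \<subset> T" by blast
      have TE: "T \<subseteq> E" and Tind: "{c \<in> convC_S smul E f T. fhat smul E f c = 0} = {(\<lambda>_. 0)}"
        using Ti unfolding indepL_def by auto
      obtain e where eT: "e \<in> T" and eS: "e \<notin> S" using ST by blast
      have eE: "e \<in> E" using eT TE by auto
      obtain c where cS: "c \<in> convC_S smul E f S" and cf: "fhat smul E f c = f e"
        using all eE by (metis imageE)
      have cout: "\<And>x. x \<notin> S \<Longrightarrow> c x = 0"
        using cS unfolding convC_S_def convC_def by auto
      have csum: "((\<lambda>x. smul (c x) (f x)) has_sum f e) E"
        using cS cf unfolding convC_S_def convC_def fhat_def
        by (metis (no_types, lifting) mem_Collect_eq has_sum_infsum)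
      define d where "d = c(e := -1)"
      have h2: "((\<lambda>x. smul (c x) (f x) + (if x = e then - f e else 0)) has_sum (f e + - f e)) E"
        by (rule has_sum_add_tvs[OF cadd csum has_sum_single[OF eE]])
      have eq: "smul (c x) (f x) + (if x = e then - f e else 0) = smul (d x) (f x)" for x
        using cout[OF eS] z by (auto simp: d_def)
      have hs: "((\<lambda>x. smul (d x) (f x)) has_sum 0) E"
        using h2 unfolding eq by simp
      have "d \<in> convC_S smul E f T"
        unfolding convC_S_def convC_def using hs cout eE ST SE eT
        by (auto simp: d_def summable_on_def)
      moreover have "fhat smul E f d = 0"
        unfolding fhat_def using hs by (rule infsumI)
      ultimately have "d \<in> {c \<in> convC_S smul E f T. fhat smul E f c = 0}" by simp
      then have "d = (\<lambda>_. 0)" using Tind by blast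
      then have "d e = 0" by simp
      then show False by (simp add: d_def)
    qed
  qed
qed

end
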